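(* Let $0<q<1$ and $f(z)=\sum_{k\ge0}(-1)^kz^kq^{k(k-1)}$. For every $n\in\mathbb Z$, $$\langle n|S^+_0|n-1\rangle=\langle n-1|S^-_0|n\rangle=q^{|n|}f(q^{2|n|+2}).$$ Moreover, there exist constants $C_1,c>0$ depending only on $q$ such that $\tilde p(m):=\langle1|S^+_m-S^+_{m-1}|0\rangle$ satisfies $|\tilde p(m)|<C_1e^{-c|m|}$ for all $m\in\mathbb Z$.
   Context: Fix $0<q<1$, related to the anisotropy by $q+q^{-1}=2\Delta$ with $\Delta>1$. Let $\Omega^{+-}=\bigotimes_{x\le0}|\!\uparrow\rangle\otimes\bigotimes_{x>0}|\!\downarrow\rangle$, and let $\mathcal H$ be the incomplete tensor product space generated from it. Define the grand-canonical vector $$\psi(z)=\prod_{x\le0}(1+z^{-1}q^{-x}S^-_x)\prod_{x\ge1}(1+zq^{x}S^+_x)\,\Omega^{+-}$$ for $z\neq0$. Expand it as $\psi(z)=\sum_{n\in\mathbb Z}\psi_nz^n$. Explicitly, $\psi_n$ is the sum, over finite sets $A\subset\{x\le0\}$ and $B\subset\{x\ge1\}$ with $|B|-|A|=n$, of $\prod_{x\in A}q^{|x|}\prod_{y\in B}q^{y}$ times the vector obtained from $\Omega^{+-}$ by flipping the spins in $A\cup B$. The vector $\psi_n$ has renormalized total $S^3$ equal to $n$. The kink ground states are $|n\rangle=\psi_n/\|\psi_n\|$, $n\in\mathbb Z$. *)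

theory Defs
  imports "HOL-Analysis.Analysis"
begin

text \<open>Basis configurations of the incomplete tensor product space generated from
  Omega^{+-} are labelled by the finite set F of sites whose spin is flipped
  relative to Omega^{+-} (all up on x \<le> 0, all down on x \<ge> 1).
  A vector is its coefficient function on such sets (values on infinite sets are
  irrelevant: inner products only sum over finite F).\<close>

type_synonym vec = "int set \<Rightarrow> real"

definition spin_up :: "int set \<Rightarrow> int \<Rightarrow> bool" where
  "spin_up F x = (if x \<le> 0 then x \<notin> F else x \<in> F)"

definition flip :: "int \<Rightarrow> int set \<Rightarrow> int set" where
  "flip x F = (if x \<in> F then F - {x} else insert x F)"

text \<open>S^+_x |F> = |flip x F> if the spin at x is down in F, and 0 otherwise;
  S^-_x analogously.  Coefficientwise:\<close>
definition Splus :: "int \<Rightarrow> vec \<Rightarrow> vec" where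
  "Splus x v = (\<lambda>F. if spin_up F x then v (flip x F) else 0)"

definition Sminus :: "int \<Rightarrow> vec \<Rightarrow> vec" where
  "Sminus x v = (\<lambda>F. if spin_up F x then 0 else v (flip x F))"

definition inner_vec :: "vec \<Rightarrow> vec \<Rightarrow> real" where
  "inner_vec u v = (\<Sum>\<^sub>\<infinity>F\<in>{F::int set. finite F}. u F * v F)"

definition norm_vec :: "vec \<Rightarrow> real" where
  "norm_vec v = sqrt (inner_vec v v)"

text \<open>Renormalized total S^3 of the configuration F: |B| - |A|.\<close>
definition charge :: "int set \<Rightarrow> int" where
  "charge F = int (card {x\<in>F. x \<ge> 1}) - int (card {x\<in>F. x \<le> 0})"

definition psi :: "real \<Rightarrow> int \<Rightarrow> vec" where
  "psi q n = (\<lambda>F. if finite F \<and> charge F = n then q ^ (\<Sum>x\<in>F. nat \<bar>x\<bar>) else 0)"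

definition ket :: "real \<Rightarrow> int \<Rightarrow> vec" where
  "ket q n = (\<lambda>F. psi q n F / norm_vec (psi q n))"

definition fq :: "real \<Rightarrow> real \<Rightarrow> real" where
  "fq q z = (\<Sum>k. (-1) ^ k * z ^ k * q ^ (k * (k - 1)))"

definition ptilde :: "real \<Rightarrow> int \<Rightarrow> real" where
  "ptilde q m = inner_vec (ket q 1) (\<lambda>F. Splus m (ket q 0) F - Splus (m - 1) (ket q 0) F)"

end

theory Submission
  imports Defs "HOL-Analysis.Analysis"
begin


definition sg :: "int \<Rightarrow> int" where "sg x = (if x \<ge> 1 then 1 else -1)"
definition szI :: "int set \<Rightarrow> int" where "szI F = (\<Sum>x\<in>F. \<bar>x\<bar>)"
definition sz :: "int set \<Rightarrow> nat" where "sz F = (\<Sum>x\<in>F. nat \<bar>x\<bar>)"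
definition tau :: "int set \<Rightarrow> int set" where "tau F = flip 1 ((\<lambda>x. x + 1) ` F)"
definition taui :: "int set \<Rightarrow> int set" where "taui G = (\<lambda>x. x - 1) ` (flip 1 G)"

lemma sz_int: "int (sz F) = szI F"
  unfolding sz_def szI_def by (simp add: of_nat_sum)

lemma charge_sg: assumes "finite F" shows "charge F = (\<Sum>x\<in>F. sg x)"
proof -
  have "(\<Sum>x\<in>F. sg x) = (\<Sum>x\<in>F \<inter> {x. x \<ge> 1}. 1) + (\<Sum>x\<in>F \<inter> - {x. x \<ge> 1}. -1)"
    unfolding sg_def by (rule sum.If_cases[OF assms])
  also have "F \<inter> {x. x \<ge> 1} = {x\<in>F. x \<ge> 1}" by auto
  also have "F \<inter> - {x. x \<ge> 1} = {x\<in>F. x \<le> 0}" by auto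
  finally show ?thesis unfolding charge_def by simp
qed

lemma sum_insert_flip:
  fixes h :: "int \<Rightarrow> 'a::ab_group_add"
  assumes "finite F"
  shows "sum h (flip x F) = (if x \<in> F then sum h F - h x else sum h F + h x)"
proof (cases "x \<in> F")
  case True
  then show ?thesis using assms unfolding flip_def by (simp add: sum_diff1)
next
  case False
  then show ?thesis using assms unfolding flip_def by (simp add: add.commute)
qed

lemma finite_flip[simp]: "finite (flip x F) = finite F"
  unfolding flip_def by auto

lemma flip_flip[simp]: "flip x (flip x F) = F"
  unfolding flip_def by auto

lemma mem_flip: "y \<in> flip x F \<longleftrightarrow> (if y = x then x \<notin> F else y \<in> F)"
  unfolding flip_def by auto

lemma charge_flip: assumes "finite F"
  shows "charge (flip x F) = (if x \<in> F then charge F - sg x else charge F + sg x)"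
  using assms by (simp add: charge_sg sum_insert_flip)

lemma szI_flip: assumes "finite F"
  shows "szI (flip x F) = (if x \<in> F then szI F - \<bar>x\<bar> else szI F + \<bar>x\<bar>)"
  using assms unfolding szI_def by (simp add: sum_insert_flip)

lemma sz_flip0: assumes "finite F" shows "sz (flip 0 F) = sz F"
proof -
  have "int (sz (flip 0 F)) = int (sz F)" using szI_flip[OF assms, of 0] by (simp add: sz_int)
  thus ?thesis by simp
qed

lemma shift_sum: "sum h ((\<lambda>x::int. x + 1) ` F) = (\<Sum>x\<in>F. h (x + 1))"
  by (subst sum.reindex) (auto simp: inj_on_def)

lemma sg_shift: "sg (x + 1) = sg x + (if x = 0 then 2 else 0)"
  unfolding sg_def by auto

lemma abs_shift: "\<bar>x + 1\<bar> = \<bar>x\<bar> + sg x + (if x = 0 then 2 else 0)"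
  unfolding sg_def by auto

lemma one_in_shift: "(1::int) \<in> (\<lambda>x. x + 1) ` F \<longleftrightarrow> 0 \<in> F"
  by (auto simp: image_iff)

lemma charge_tau: assumes "finite F" shows "charge (tau F) = charge F + 1"
proof -
  have f: "finite ((\<lambda>x. x + 1) ` F)" using assms by simp
  have "charge ((\<lambda>x. x + 1) ` F) = charge F + (if 0 \<in> F then 2 else 0)"
    using assms by (simp add: charge_sg f shift_sum sg_shift sum.distrib)
  then show ?thesis unfolding tau_def using assms
    by (simp add: charge_flip f one_in_shift sg_def)
qed

lemma szI_tau: assumes "finite F" shows "szI (tau F) = szI F + charge F + 1"
proof -
  have f: "finite ((\<lambda>x. x + 1) ` F)" using assms by simp
  have "szI ((\<lambda>x. x + 1) ` F) = szI F + charge F + (if 0 \<in> F then 2 else 0)"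
    using assms unfolding szI_def by (simp add: charge_sg shift_sum abs_shift sum.distrib)
  then show ?thesis unfolding tau_def using assms
    by (simp add: szI_flip f one_in_shift)
qed

lemma finite_tau: "finite F \<Longrightarrow> finite (tau F)" unfolding tau_def by simp

lemma tau_bij: "bij_betw tau {F. finite F} {F. finite F}"
proof (rule bij_betw_byWitness[where f' = taui])
  show "\<forall>a\<in>{F. finite F}. taui (tau a) = a"
    unfolding tau_def taui_def by (auto simp: image_image)
  show "\<forall>a\<in>{F. finite F}. tau (taui a) = a"
    unfolding tau_def taui_def by (auto simp: image_image)
  show "tau ` {F. finite F} \<subseteq> {F. finite F}" by (auto simp: finite_tau)
  show "taui ` {F. finite F} \<subseteq> {F. finite F}" by (auto simp: taui_def)
qed

lemma flip_bij: "bij_betw (flip x) {F. finite F} {F. finite F}"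
  by (rule bij_betw_byWitness[where f' = "flip x"]) auto



lemma geo_bound: fixes p :: real assumes "0 \<le> p" "p < 1" "finite J"
  shows "(\<Sum>j\<in>J. p ^ j) \<le> 1 / (1 - p)"
proof -
  have s: "summable (\<lambda>j. p ^ j)" using assms by (simp add: summable_geometric)
  have "(\<Sum>j\<in>J. p ^ j) \<le> (\<Sum>j. p ^ j)"
    by (rule sum_le_suminf[OF s assms(3)]) (use assms in auto)
  also have "\<dots> = 1 / (1 - p)" using assms by (simp add: suminf_geometric)
  finally show ?thesis .
qed

lemma int_geo_bound: fixes p :: real assumes "0 \<le> p" "p < 1" "finite S"
  shows "(\<Sum>x\<in>S. p ^ nat \<bar>x\<bar>) \<le> 2 / (1 - p)"
proof -
  let ?P = "S \<inter> {x. x \<ge> 0}" and ?N = "S \<inter> - {x. x \<ge> 0}"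
  have split: "(\<Sum>x\<in>S. p ^ nat \<bar>x\<bar>) = (\<Sum>x\<in>?P. p ^ nat \<bar>x\<bar>) + (\<Sum>x\<in>?N. p ^ nat \<bar>x\<bar>)"
    using sum.If_cases[OF assms(3), of "\<lambda>x. x \<ge> 0" "\<lambda>x. p ^ nat \<bar>x\<bar>" "\<lambda>x. p ^ nat \<bar>x\<bar>"] by simp
  have "(\<Sum>x\<in>?P. p ^ nat \<bar>x\<bar>) = (\<Sum>j\<in>nat ` ?P. p ^ j)"
    by (subst sum.reindex) (auto simp: inj_on_def)
  also have "\<dots> \<le> 1 / (1 - p)" using assms by (intro geo_bound) auto
  finally have 1: "(\<Sum>x\<in>?P. p ^ nat \<bar>x\<bar>) \<le> 1 / (1 - p)" .
  have "(\<Sum>x\<in>?N. p ^ nat \<bar>x\<bar>) = (\<Sum>j\<in>(\<lambda>x. nat (-x)) ` ?N. p ^ j)"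
    by (subst sum.reindex) (auto simp: inj_on_def intro!: sum.cong)
  also have "\<dots> \<le> 1 / (1 - p)" using assms by (intro geo_bound) auto
  finally have 2: "(\<Sum>x\<in>?N. p ^ nat \<bar>x\<bar>) \<le> 1 / (1 - p)" .
  show ?thesis using split 1 2 by (simp add: field_simps)
qed

lemma W_summable: fixes p :: real assumes "0 \<le> p" "p < 1"
  shows "(\<lambda>F. p ^ sz F) summable_on {F. finite F}"
proof (rule nonneg_bdd_above_summable_on)
  show "\<And>F. F \<in> {F. finite F} \<Longrightarrow> 0 \<le> p ^ sz F" using assms by simp
  show "bdd_above (sum (\<lambda>F. p ^ sz F) ` {FF. FF \<subseteq> {F. finite F} \<and> finite FF})"
  proof (rule bdd_aboveI2)
    fix FF :: "int set set" assume FF: "FF \<in> {FF. FF \<subseteq> {F. finite F} \<and> finite FF}"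
    define S where "S = \<Union>FF"
    have fS: "finite S" using FF unfolding S_def by auto
    have sub: "FF \<subseteq> Pow S" unfolding S_def by auto
    have "(\<Sum>F\<in>FF. p ^ sz F) \<le> (\<Sum>F\<in>Pow S. p ^ sz F)"
      by (rule sum_mono2) (use fS sub assms in auto)
    also have "\<dots> = (\<Sum>X\<in>Pow S. (\<Prod>x\<in>X. p ^ nat \<bar>x\<bar>) * (\<Prod>x\<in>S - X. 1))"
      by (simp add: sz_def power_sum)
    also have "\<dots> = (\<Prod>x\<in>S. p ^ nat \<bar>x\<bar> + 1)"
      by (rule prod_add[symmetric, OF fS])
    also have "\<dots> \<le> (\<Prod>x\<in>S. exp (p ^ nat \<bar>x\<bar>))"
      by (rule prod_mono) (use assms in \<open>auto simp: add.commute[of _ 1] exp_ge_add_one_self\<close>)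
    also have "\<dots> = exp (\<Sum>x\<in>S. p ^ nat \<bar>x\<bar>)" by (simp add: exp_sum[OF fS])
    also have "\<dots> \<le> exp (2 / (1 - p))" using int_geo_bound[OF assms fS] by simp
    finally show "(\<Sum>F\<in>FF. p ^ sz F) \<le> exp (2 / (1 - p))" .
  qed
qed

lemma summable_dom: fixes f g :: "'a \<Rightarrow> real"
  assumes "g summable_on A" "\<And>x. x \<in> A \<Longrightarrow> \<bar>f x\<bar> \<le> g x"
  shows "f summable_on A"
proof -
  have "(\<lambda>x. norm (g x)) summable_on A" using assms(1) summable_on_iff_abs_summable_on_real by blast
  then have "(\<lambda>x. norm (f x)) summable_on A"
    by (rule Infinite_Sum.abs_summable_on_comparison_test) (use assms(2) in force)
  then show ?thesis using summable_on_iff_abs_summable_on_real by blast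
qed



definition Zs :: "real \<Rightarrow> int \<Rightarrow> real" where
  "Zs q n = infsum (\<lambda>F. if charge F = n then (q\<^sup>2) ^ sz F else 0) {F. finite F}"
definition As :: "real \<Rightarrow> int \<Rightarrow> real" where
  "As q n = infsum (\<lambda>F. if charge F = n \<and> 0 \<notin> F then (q\<^sup>2) ^ sz F else 0) {F. finite F}"

lemma sz_tau_pos: assumes "finite F" "charge F = p - 1" "p \<ge> 0"
  shows "sz (tau F) = sz F + nat p"
proof -
  have "int (sz (tau F)) = int (sz F) + p" using szI_tau[OF assms(1)] assms by (simp add: sz_int)
  thus ?thesis using assms(3) by linarith
qed

lemma sz_tau_neg: assumes "finite F" "charge F = p - 1" "p \<le> 0"
  shows "sz F = sz (tau F) + nat (- p)"
proof -
  have "int (sz (tau F)) = int (sz F) + p" using szI_tau[OF assms(1)] assms by (simp add: sz_int)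
  thus ?thesis using assms(3) by linarith
qed

lemma psi_eq: "psi q n F = (if finite F \<and> charge F = n then q ^ sz F else 0)"
  by (simp add: psi_def sz_def)

context
  fixes q :: real
  assumes q0: "0 < q" and q1: "q < 1"
begin

lemma Q_summable: "(\<lambda>F. (q\<^sup>2) ^ sz F) summable_on {F. finite F}"
  using q0 q1 by (intro W_summable) (auto simp: power_less_one_iff)

lemma cond_summable: "(\<lambda>F. if P F then (q\<^sup>2) ^ sz F else 0) summable_on {F. finite F}"
  by (rule summable_dom[OF Q_summable]) auto

lemma Zs_rec_pos: assumes "p \<ge> 0" shows "Zs q p = (q\<^sup>2) ^ nat p * Zs q (p - 1)"
proof -
  let ?g = "\<lambda>F. if charge F = p then (q\<^sup>2) ^ sz F else 0"
  have "Zs q p = infsum (\<lambda>F. ?g (tau F)) {F. finite F}"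
    unfolding Zs_def by (rule infsum_reindex_bij_betw[OF tau_bij, symmetric])
  also have "\<dots> = infsum (\<lambda>F. (q\<^sup>2) ^ nat p * (if charge F = p - 1 then (q\<^sup>2) ^ sz F else 0)) {F. finite F}"
  proof (rule infsum_cong)
    fix F :: "int set" assume "F \<in> {F. finite F}"
    then have f: "finite F" by simp
    show "?g (tau F) = (q\<^sup>2) ^ nat p * (if charge F = p - 1 then (q\<^sup>2) ^ sz F else 0)"
      using sz_tau_pos[OF f _ assms] charge_tau[OF f] by (auto simp: power_add)
  qed
  also have "\<dots> = (q\<^sup>2) ^ nat p * Zs q (p - 1)"
    unfolding Zs_def by (rule infsum_cmult_right')
  finally show ?thesis .
qed

lemma Zs_rec_neg: assumes "p \<le> 0" shows "Zs q (p - 1) = (q\<^sup>2) ^ nat (- p) * Zs q p"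
proof -
  let ?g = "\<lambda>F. if charge F = p then (q\<^sup>2) ^ sz F else 0"
  have "Zs q (p - 1) = infsum (\<lambda>F. (q\<^sup>2) ^ nat (- p) * ?g (tau F)) {F. finite F}"
    unfolding Zs_def
  proof (rule infsum_cong)
    fix F :: "int set" assume "F \<in> {F. finite F}"
    then have f: "finite F" by simp
    show "(if charge F = p - 1 then (q\<^sup>2) ^ sz F else 0) = (q\<^sup>2) ^ nat (- p) * ?g (tau F)"
      using sz_tau_neg[OF f _ assms] charge_tau[OF f] by (auto simp: power_add)
  qed
  also have "\<dots> = (q\<^sup>2) ^ nat (- p) * infsum (\<lambda>F. ?g (tau F)) {F. finite F}"
    by (rule infsum_cmult_right')
  also have "infsum (\<lambda>F. ?g (tau F)) {F. finite F} = Zs q p"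
    unfolding Zs_def by (rule infsum_reindex_bij_betw[OF tau_bij])
  finally show ?thesis .
qed

lemma As_flip: "infsum (\<lambda>F. if charge F = n \<and> 0 \<in> F then (q\<^sup>2) ^ sz F else 0) {F. finite F} = As q (n + 1)"
proof -
  let ?g = "\<lambda>F. if charge F = n \<and> 0 \<in> F then (q\<^sup>2) ^ sz F else 0"
  have "infsum ?g {F. finite F} = infsum (\<lambda>F. ?g (flip 0 F)) {F. finite F}"
    by (rule infsum_reindex_bij_betw[OF flip_bij, symmetric])
  also have "\<dots> = As q (n + 1)" unfolding As_def
  proof (rule infsum_cong)
    fix F :: "int set" assume "F \<in> {F. finite F}"
    then have f: "finite F" by simp
    show "?g (flip 0 F) = (if charge F = n + 1 \<and> 0 \<notin> F then (q\<^sup>2) ^ sz F else 0)"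
      using charge_flip[OF f, of 0] sz_flip0[OF f] by (auto simp: mem_flip sg_def)
  qed
  finally show ?thesis .
qed

lemma As_rec: "As q n + As q (n + 1) = Zs q n"
proof -
  have "Zs q n = infsum (\<lambda>F. (if charge F = n \<and> 0 \<notin> F then (q\<^sup>2) ^ sz F else 0)
       + (if charge F = n \<and> 0 \<in> F then (q\<^sup>2) ^ sz F else 0)) {F. finite F}"
    unfolding Zs_def by (rule infsum_cong) auto
  also have "\<dots> = As q n + As q (n + 1)"
    by (subst infsum_add[OF cond_summable cond_summable]) (simp add: As_def As_flip)
  finally show ?thesis by simp
qed

lemma As_nonneg: "As q n \<ge> 0"
  unfolding As_def by (rule infsum_nonneg) auto

lemma Zs0: "Zs q 0 \<ge> 1"
proof -
  have "infsum (\<lambda>F. if charge F = 0 then (q\<^sup>2) ^ sz F else 0) {{}} \<le> Zs q 0"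
    unfolding Zs_def by (rule infsum_mono_neutral[OF _ cond_summable]) auto
  moreover have "infsum (\<lambda>F. if charge F = 0 then (q\<^sup>2) ^ sz F else (0::real)) {{}} = 1"
    by (simp add: charge_def sz_def)
  ultimately show ?thesis by simp
qed

lemma Zs_pos: "Zs q n > 0"
proof (induction n rule: int_induct[where k = 0])
  case base then show ?case using Zs0 by simp
next
  case (step1 i)
  then show ?case using Zs_rec_pos[of "i + 1"] q0 by simp
next
  case (step2 i)
  then show ?case using Zs_rec_neg[of i] q0 by simp
qed

lemma inner_psi: "inner_vec (psi q n) (psi q n) = Zs q n"
  unfolding inner_vec_def Zs_def
  by (rule infsum_cong) (auto simp: psi_eq power_mult_distrib power2_eq_square)

lemma inner_Splus0: "inner_vec (psi q n) (Splus 0 (psi q (n - 1))) = As q n"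
  unfolding inner_vec_def As_def
proof (rule infsum_cong)
  fix F :: "int set" assume "F \<in> {F. finite F}"
  then have f: "finite F" by simp
  show "psi q n F * Splus 0 (psi q (n - 1)) F = (if charge F = n \<and> 0 \<notin> F then (q\<^sup>2) ^ sz F else 0)"
    using f charge_flip[OF f, of 0] sz_flip0[OF f]
    by (auto simp: psi_eq Splus_def spin_up_def mem_flip sg_def power_mult_distrib power2_eq_square)
qed

lemma inner_Sminus0: "inner_vec (psi q (n - 1)) (Sminus 0 (psi q n)) = As q n"
proof -
  have "inner_vec (psi q (n - 1)) (Sminus 0 (psi q n)) =
     infsum (\<lambda>F. if charge F = n - 1 \<and> 0 \<in> F then (q\<^sup>2) ^ sz F else 0) {F. finite F}"
    unfolding inner_vec_def
  proof (rule infsum_cong)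
    fix F :: "int set" assume "F \<in> {F. finite F}"
    then have f: "finite F" by simp
    show "psi q (n - 1) F * Sminus 0 (psi q n) F = (if charge F = n - 1 \<and> 0 \<in> F then (q\<^sup>2) ^ sz F else 0)"
      using f charge_flip[OF f, of 0] sz_flip0[OF f]
      by (auto simp: psi_eq Sminus_def spin_up_def mem_flip sg_def power_mult_distrib power2_eq_square)
  qed
  also have "\<dots> = As q n" using As_flip[of "n - 1"] by simp
  finally show ?thesis .
qed

end


lemma seq_nat:
  fixes q :: real and Z a :: "int \<Rightarrow> real" and n :: nat
  assumes q0: "0 < q" and q1: "q < 1"
    and H1: "\<And>p. p \<ge> 0 \<Longrightarrow> Z p = (q\<^sup>2) ^ nat p * Z (p - 1)"
    and H3: "\<And>n. a n + a (n + 1) = Z n"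
    and Ha: "\<And>n. a n \<ge> 0" and HZ: "\<And>n. Z n > 0"
  shows "a (int n) / sqrt (Z (int n) * Z (int n - 1)) = q ^ n * fq q (q ^ (2 * n + 2))"
proof -
  have Zk: "Z (int n + int k) = Z n * q ^ (2 * n * k + k\<^sup>2 + k)" for k
  proof (induction k)
    case 0 then show ?case by simp
  next
    case (Suc k)
    have "Z (int n + int (Suc k)) = (q\<^sup>2) ^ (n + k + 1) * Z (int n + int k)"
      using H1[of "int n + int (Suc k)"] by (simp add: nat_add_distrib add.assoc)
    also have "\<dots> = (q\<^sup>2) ^ (n + k + 1) * (Z n * q ^ (2 * n * k + k\<^sup>2 + k))"
      using Suc.IH by simp
    also have "\<dots> = Z n * q ^ (2 * (n + k + 1) + (2 * n * k + k\<^sup>2 + k))"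
    proof -
      have pw: "(q\<^sup>2) ^ (n + k + 1) = q ^ (2 * (n + k + 1))" by (simp only: power_mult)
      have "q ^ (2 * (n + k + 1)) * q ^ (2 * n * k + k\<^sup>2 + k) = q ^ (2 * (n + k + 1) + (2 * n * k + k\<^sup>2 + k))"
        by (rule power_add[symmetric])
      then show ?thesis unfolding pw by (metis mult.left_commute)
    qed
    also have "2 * (n + k + 1) + (2 * n * k + k\<^sup>2 + k) = 2 * n * Suc k + (Suc k)\<^sup>2 + Suc k"
      by (simp add: power2_eq_square algebra_simps)
    finally show ?case .
  qed
  have tel: "(\<Sum>k<K. (-1) ^ k * Z (int n + int k)) = a n - (-1) ^ K * a (int n + int K)" for K
  proof (induction K)
    case 0 then show ?case by simp
  next
    case (Suc K)
    have h: "Z (int n + int K) = a (int n + int K) + a (int n + int K + 1)" using H3 by simp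
    have "(\<Sum>k<Suc K. (-1) ^ k * Z (int n + int k)) = (\<Sum>k<K. (-1) ^ k * Z (int n + int k)) + (-1) ^ K * Z (int n + int K)"
      by simp
    also have "\<dots> = a n - (-1) ^ K * a (int n + int K) + (-1) ^ K * (a (int n + int K) + a (int n + int K + 1))"
      using Suc.IH h by simp
    also have "\<dots> = a n - (-1) ^ Suc K * a (int n + int (Suc K))" by (simp add: algebra_simps)
    finally show ?case .
  qed
  have lim0: "(\<lambda>K. a (int n + int K)) \<longlonglongrightarrow> 0"
  proof (rule tendsto_sandwich[of "\<lambda>_. 0" _ sequentially "\<lambda>K. Z n * q ^ K"])
    show "\<forall>\<^sub>F K in sequentially. 0 \<le> a (int n + int K)" using Ha by simp
    show "\<forall>\<^sub>F K in sequentially. a (int n + int K) \<le> Z n * q ^ K"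
    proof (intro always_eventually allI)
      fix K
      have "a (int n + int K) \<le> Z (int n + int K)" using H3[of "int n + int K"] Ha[of "int n + int K + 1"] by simp
      also have "\<dots> = Z n * q ^ (2 * n * K + K\<^sup>2 + K)" by (rule Zk)
      also have "\<dots> \<le> Z n * q ^ K"
        using HZ[of n] q0 q1 by (intro mult_left_mono power_decreasing) auto
      finally show "a (int n + int K) \<le> Z n * q ^ K" .
    qed
    show "(\<lambda>_. 0) \<longlonglongrightarrow> (0::real)" by simp
    show "(\<lambda>K. Z n * q ^ K) \<longlonglongrightarrow> 0"
      using q0 q1 by (intro tendsto_mult_right_zero LIMSEQ_power_zero) auto
  qed
  have "(\<lambda>K. a n - (-1) ^ K * a (int n + int K)) \<longlonglongrightarrow> a n - 0"
  proof (intro tendsto_diff tendsto_const)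
    have "(\<lambda>K. norm ((-1::real) ^ K * a (int n + int K))) \<longlonglongrightarrow> 0"
      using lim0 by (simp add: abs_mult tendsto_rabs_zero_iff)
    then show "(\<lambda>K. (-1::real) ^ K * a (int n + int K)) \<longlonglongrightarrow> 0"
      using tendsto_norm_zero_iff by blast
  qed
  then have "(\<lambda>k. (-1) ^ k * Z (int n + int k)) sums a n"
    unfolding sums_def using tel by simp
  moreover have "(\<lambda>k. (-1) ^ k * Z (int n + int k)) = (\<lambda>k. Z n * ((-1) ^ k * (q ^ (2 * n + 2)) ^ k * q ^ (k * (k - 1))))"
  proof
    fix k :: nat
    have e: "(2 * n + 2) * k + k * (k - 1) = 2 * n * k + k\<^sup>2 + k"
      by (cases k) (auto simp: power2_eq_square algebra_simps)
    show "(-1) ^ k * Z (int n + int k) = Z n * ((-1) ^ k * (q ^ (2 * n + 2)) ^ k * q ^ (k * (k - 1)))"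
    proof -
      have p1: "(q ^ (2 * n + 2)) ^ k * q ^ (k * (k - 1)) = q ^ (2 * n * k + k\<^sup>2 + k)"
      proof -
        have "(q ^ (2 * n + 2)) ^ k * q ^ (k * (k - 1)) = q ^ ((2 * n + 2) * k) * q ^ (k * (k - 1))"
          by (simp only: power_mult)
        also have "\<dots> = q ^ ((2 * n + 2) * k + k * (k - 1))" by (simp only: power_add)
        also have "\<dots> = q ^ (2 * n * k + k\<^sup>2 + k)" by (simp only: e)
        finally show ?thesis .
      qed
      show ?thesis unfolding Zk mult.assoc[of "(-1) ^ k"] p1 by (simp add: mult_ac)
    qed
  qed
  ultimately have "(\<lambda>k. Z n * ((-1) ^ k * (q ^ (2 * n + 2)) ^ k * q ^ (k * (k - 1)))) sums a n" by simp
  moreover have "summable (\<lambda>k. (-1) ^ k * (q ^ (2 * n + 2)) ^ k * q ^ (k * (k - 1)))"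
  proof -
    have "summable (\<lambda>k. Z n * ((-1) ^ k * (q ^ (2 * n + 2)) ^ k * q ^ (k * (k - 1))))"
      using calculation sums_summable by blast
    then have "summable (\<lambda>k. inverse (Z n) * (Z n * ((-1) ^ k * (q ^ (2 * n + 2)) ^ k * q ^ (k * (k - 1)))))"
      by (rule summable_mult)
    then show ?thesis using HZ[of n] by simp
  qed
  ultimately have an: "a n = Z n * fq q (q ^ (2 * n + 2))"
    unfolding fq_def by (intro sums_unique2) (auto intro: sums_mult summable_sums)
  have "Z n = (q\<^sup>2) ^ n * Z (int n - 1)" using H1[of n] by simp
  then have "Z n * Z (int n - 1) = (Z n / q ^ n)\<^sup>2"
    using q0 by (simp add: power2_eq_square power_mult_distrib field_simps)
  then have sq: "sqrt (Z n * Z (int n - 1)) = Z n / q ^ n"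
    using HZ[of n] q0 by simp
  have "Z n \<noteq> 0" "q ^ n \<noteq> 0" using HZ[of n] q0 by auto
  then show ?thesis unfolding sq an by (simp add: field_simps)
qed

lemma seq_int:
  fixes q :: real and Z a :: "int \<Rightarrow> real" and n :: int
  assumes q0: "0 < q" and q1: "q < 1"
    and H1: "\<And>p. p \<ge> 0 \<Longrightarrow> Z p = (q\<^sup>2) ^ nat p * Z (p - 1)"
    and H2: "\<And>p. p \<le> 0 \<Longrightarrow> Z (p - 1) = (q\<^sup>2) ^ nat (- p) * Z p"
    and H3: "\<And>n. a n + a (n + 1) = Z n"
    and Ha: "\<And>n. a n \<ge> 0" and HZ: "\<And>n. Z n > 0"
  shows "a n / sqrt (Z n * Z (n - 1)) = q ^ nat \<bar>n\<bar> * fq q (q ^ (2 * nat \<bar>n\<bar> + 2))"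
proof (cases "n \<ge> 0")
  case True
  then obtain m where m: "n = int m" by (metis nonneg_eq_int)
  show ?thesis using seq_nat[OF q0 q1 H1 H3 Ha HZ, of m] m by simp
next
  case False
  define m where "m = nat (- n)"
  have n: "n = - int m" using False m_def by simp
  define Z' where "Z' p = Z (-1 - p)" for p
  define a' where "a' p = a (- p)" for p
  have "a' (int m) / sqrt (Z' (int m) * Z' (int m - 1)) = q ^ m * fq q (q ^ (2 * m + 2))"
  proof (rule seq_nat[OF q0 q1])
    show "Z' p = (q\<^sup>2) ^ nat p * Z' (p - 1)" if "p \<ge> 0" for p
    proof -
      have e1: "Z' p = Z (- p - 1)" unfolding Z'_def by (rule arg_cong[where f = Z]) simp
      have e2: "Z' (p - 1) = Z (- p)" unfolding Z'_def by (rule arg_cong[where f = Z]) simp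
      show ?thesis unfolding e1 e2 using H2[of "- p"] that by simp
    qed
    show "a' k + a' (k + 1) = Z' k" for k
    proof -
      have e1: "Z' k = Z (- k - 1)" unfolding Z'_def by (rule arg_cong[where f = Z]) simp
      have e2: "a' (k + 1) = a (- k - 1)" unfolding a'_def by (rule arg_cong[where f = a]) simp
      show ?thesis unfolding e1 e2 using H3[of "- k - 1"] by (simp add: a'_def)
    qed
  qed (auto simp: Z'_def a'_def Ha HZ)
  moreover have "Z (-1 - int m) = Z (- int m - 1)" by (rule arg_cong[where f = Z]) simp
  ultimately show ?thesis unfolding Z'_def a'_def using n by (simp add: mult.commute)
qed



lemma norm_psi: "0 < q \<Longrightarrow> q < 1 \<Longrightarrow> norm_vec (psi q n) = sqrt (Zs q n)"
  unfolding norm_vec_def by (simp add: inner_psi)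

lemma part1:
  fixes q :: real assumes q0: "0 < q" and q1: "q < 1"
  shows "inner_vec (ket q n) (Splus 0 (ket q (n - 1))) = q ^ nat \<bar>n\<bar> * fq q (q ^ (2 * nat \<bar>n\<bar> + 2))"
    and "inner_vec (ket q (n - 1)) (Sminus 0 (ket q n)) = q ^ nat \<bar>n\<bar> * fq q (q ^ (2 * nat \<bar>n\<bar> + 2))"
proof -
  have key: "As q n / sqrt (Zs q n * Zs q (n - 1)) = q ^ nat \<bar>n\<bar> * fq q (q ^ (2 * nat \<bar>n\<bar> + 2))"
  proof (rule seq_int[OF q0 q1])
    show "Zs q p = (q\<^sup>2) ^ nat p * Zs q (p - 1)" if "p \<ge> 0" for p using Zs_rec_pos[OF q0 q1 that] .
    show "Zs q (p - 1) = (q\<^sup>2) ^ nat (- p) * Zs q p" if "p \<le> 0" for p using Zs_rec_neg[OF q0 q1 that] .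
    show "As q k + As q (k + 1) = Zs q k" for k using As_rec[OF q0 q1] .
    show "As q k \<ge> 0" for k using As_nonneg[OF q0 q1] .
    show "Zs q k > 0" for k using Zs_pos[OF q0 q1] .
  qed
  let ?c = "1 / (sqrt (Zs q n) * sqrt (Zs q (n - 1)))"
  have "inner_vec (ket q n) (Splus 0 (ket q (n - 1))) =
      infsum (\<lambda>F. psi q n F * Splus 0 (psi q (n - 1)) F * ?c) {F. finite F}"
    unfolding inner_vec_def ket_def norm_psi[OF q0 q1] by (intro infsum_cong) (simp add: Splus_def)
  also have "\<dots> = inner_vec (psi q n) (Splus 0 (psi q (n - 1))) * ?c"
    unfolding inner_vec_def by (rule infsum_cmult_left')
  also have "\<dots> = As q n / sqrt (Zs q n * Zs q (n - 1))"
    by (simp add: inner_Splus0[OF q0 q1] real_sqrt_mult)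
  finally show "inner_vec (ket q n) (Splus 0 (ket q (n - 1))) = q ^ nat \<bar>n\<bar> * fq q (q ^ (2 * nat \<bar>n\<bar> + 2))"
    using key by simp
  have "inner_vec (ket q (n - 1)) (Sminus 0 (ket q n)) =
      infsum (\<lambda>F. psi q (n - 1) F * Sminus 0 (psi q n) F * ?c) {F. finite F}"
    unfolding inner_vec_def ket_def norm_psi[OF q0 q1] by (intro infsum_cong) (simp add: Sminus_def)
  also have "\<dots> = inner_vec (psi q (n - 1)) (Sminus 0 (psi q n)) * ?c"
    unfolding inner_vec_def by (rule infsum_cmult_left')
  also have "\<dots> = As q n / sqrt (Zs q n * Zs q (n - 1))"
    by (simp add: inner_Sminus0[OF q0 q1] real_sqrt_mult)
  finally show "inner_vec (ket q (n - 1)) (Sminus 0 (ket q n)) = q ^ nat \<bar>n\<bar> * fq q (q ^ (2 * nat \<bar>n\<bar> + 2))"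
    using key by simp
qed

lemma pow_ineq:
  fixes r :: real and a b k :: nat
  assumes "0 < r" "r \<le> 1" and "a = b + k \<or> b = a + k"
  shows "(r\<^sup>2) ^ a * (r\<^sup>2) ^ b \<le> r ^ k * r ^ a"
proof -
  have "(r\<^sup>2) ^ a * (r\<^sup>2) ^ b = r ^ (2 * a + 2 * b)"
    by (simp add: power_mult[symmetric] power_add)
  also have "\<dots> \<le> r ^ (k + a)"
    using assms by (intro power_decreasing) auto
  finally show ?thesis by (simp add: power_add)
qed

lemma term_bound:
  fixes q :: real assumes q0: "0 < q" and q1: "q < 1"
  shows "0 \<le> psi q 1 F * Splus m (psi q 0) F \<and>
         psi q 1 F * Splus m (psi q 0) F \<le> sqrt q ^ nat \<bar>m\<bar> * sqrt q ^ sz F"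
proof (cases "finite F \<and> charge F = 1 \<and> spin_up F m \<and> charge (flip m F) = 0")
  case True
  then have f: "finite F" by simp
  have val: "psi q 1 F * Splus m (psi q 0) F = q ^ sz F * q ^ sz (flip m F)"
    using True by (simp add: psi_eq Splus_def)
  have "int (sz (flip m F)) = int (sz F) - \<bar>m\<bar> \<or> int (sz (flip m F)) = int (sz F) + \<bar>m\<bar>"
    using szI_flip[OF f, of m] by (auto simp: sz_int split: if_splits)
  then have rel: "sz F = sz (flip m F) + nat \<bar>m\<bar> \<or> sz (flip m F) = sz F + nat \<bar>m\<bar>" by linarith
  have qq: "q = (sqrt q)\<^sup>2" using q0 by simp
  have "q ^ sz F * q ^ sz (flip m F) \<le> sqrt q ^ nat \<bar>m\<bar> * sqrt q ^ sz F"
    using pow_ineq[of "sqrt q" "sz F" "sz (flip m F)" "nat \<bar>m\<bar>"] rel q0 q1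
    by (subst (1 2) qq) (simp add: real_sqrt_le_1_iff)
  then show ?thesis using val q0 by simp
next
  case False
  then have "psi q 1 F * Splus m (psi q 0) F = 0"
    by (auto simp: psi_eq Splus_def)
  show ?thesis unfolding \<open>psi q 1 F * Splus m (psi q 0) F = 0\<close> using q0 by simp
qed



lemma Splus_scale: "Splus m (\<lambda>G. v G / c) F = Splus m v F / c"
  by (simp add: Splus_def)

lemma ptilde_bound:
  fixes q :: real assumes q0: "0 < q" and q1: "q < 1"
  shows "\<exists>C1 c. C1 > 0 \<and> c > 0 \<and> (\<forall>m::int. \<bar>ptilde q m\<bar> < C1 * exp (- c * \<bar>real_of_int m\<bar>))"
proof -
  define r where "r = sqrt q"
  have r0: "0 < r" and r1: "r < 1" using q0 q1 by (auto simp: r_def)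
  define T where "T = {F :: int set. finite F}"
  define M where "M = infsum (\<lambda>F. r ^ sz F) T"
  define s0 where "s0 = sqrt (Zs q 0)"
  define s1 where "s1 = sqrt (Zs q 1)"
  have s0: "s0 > 0" and s1: "s1 > 0" using Zs_pos[OF q0 q1] by (auto simp: s0_def s1_def)
  have rsum: "(\<lambda>F. r ^ sz F) summable_on T" unfolding T_def using r0 r1 by (intro W_summable) auto
  have M0: "M \<ge> 0" unfolding M_def by (rule infsum_nonneg) (use r0 in auto)
  define g where "g m F = psi q 1 F * Splus m (psi q 0) F" for m F
  have gb: "0 \<le> g m F \<and> g m F \<le> r ^ nat \<bar>m\<bar> * r ^ sz F" for m F
    unfolding g_def r_def by (rule term_bound[OF q0 q1])
  define K where "K = M * (1 + 1 / r) / (s1 * s0)"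
  have K0: "K \<ge> 0" unfolding K_def using M0 r0 s0 s1 by simp
  have main: "\<bar>ptilde q m\<bar> \<le> K * r ^ nat \<bar>m\<bar>" for m
  proof -
    define B where "B = r ^ nat \<bar>m\<bar> + r ^ nat \<bar>m - 1\<bar>"
    have "ptilde q m = infsum (\<lambda>F. (g m F - g (m - 1) F) * (1 / (s1 * s0))) T"
      unfolding ptilde_def inner_vec_def T_def
    proof (rule infsum_cong)
      fix F :: "int set"
      have k: "ket q n = (\<lambda>G. psi q n G / sqrt (Zs q n))" for n
        unfolding ket_def norm_psi[OF q0 q1] ..
      show "ket q 1 F * (Splus m (ket q 0) F - Splus (m - 1) (ket q 0) F) =
          (g m F - g (m - 1) F) * (1 / (s1 * s0))"
        unfolding k Splus_scale g_def s0_def[symmetric] s1_def[symmetric]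
        using s0 s1 by (simp add: field_simps)
    qed
    also have "\<dots> = infsum (\<lambda>F. g m F - g (m - 1) F) T * (1 / (s1 * s0))"
      by (rule infsum_cmult_left')
    finally have pt: "\<bar>ptilde q m\<bar> = \<bar>infsum (\<lambda>F. g m F - g (m - 1) F) T\<bar> / (s1 * s0)"
      using s0 s1 by (simp add: abs_mult)
    have dom: "\<bar>g m F - g (m - 1) F\<bar> \<le> B * r ^ sz F" for F
      using gb[of m F] gb[of "m - 1" F] unfolding B_def by (auto simp: algebra_simps)
    have bsum: "(\<lambda>F. B * r ^ sz F) summable_on T" using rsum by (rule summable_on_cmult_right)
    have asum: "(\<lambda>F. norm (g m F - g (m - 1) F)) summable_on T"
      by (rule summable_dom[OF bsum]) (use dom in simp)
    have "\<bar>infsum (\<lambda>F. g m F - g (m - 1) F) T\<bar> \<le> infsum (\<lambda>F. norm (g m F - g (m - 1) F)) T"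
      using norm_infsum_bound[OF asum] by simp
    also have "\<dots> \<le> infsum (\<lambda>F. B * r ^ sz F) T"
      by (rule infsum_mono[OF asum bsum]) (use dom in simp)
    also have "\<dots> = B * M" unfolding M_def by (rule infsum_cmult_right')
    also have "B \<le> (1 + 1 / r) * r ^ nat \<bar>m\<bar>"
    proof -
      have "r ^ (nat \<bar>m - 1\<bar> + 1) \<le> r ^ nat \<bar>m\<bar>"
        using r0 r1 by (intro power_decreasing) auto
      then have "r ^ nat \<bar>m - 1\<bar> * r \<le> r ^ nat \<bar>m\<bar>" by (simp add: mult.commute)
      then have "r ^ nat \<bar>m - 1\<bar> \<le> r ^ nat \<bar>m\<bar> / r" using r0 by (simp add: field_simps)
      then show ?thesis unfolding B_def by (simp add: algebra_simps)
    qed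
    then have "B * M \<le> (1 + 1 / r) * r ^ nat \<bar>m\<bar> * M" using M0 by (rule mult_right_mono)
    finally have "\<bar>infsum (\<lambda>F. g m F - g (m - 1) F) T\<bar> \<le> (1 + 1 / r) * r ^ nat \<bar>m\<bar> * M" .
    then have "\<bar>ptilde q m\<bar> \<le> (1 + 1 / r) * r ^ nat \<bar>m\<bar> * M / (s1 * s0)"
      unfolding pt using s0 s1 by (intro divide_right_mono) auto
    then show ?thesis unfolding K_def by (simp add: field_simps)
  qed
  define c where "c = - ln r"
  have c0: "c > 0" unfolding c_def using r0 r1 by simp
  have ex: "r ^ nat \<bar>m\<bar> = exp (- c * \<bar>real_of_int m\<bar>)" for m :: int
  proof -
    have "exp (- c * \<bar>real_of_int m\<bar>) = exp (real (nat \<bar>m\<bar>) * ln r)"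
      unfolding c_def by simp
    also have "\<dots> = exp (ln r) ^ nat \<bar>m\<bar>" by (rule exp_of_nat_mult)
    also have "\<dots> = r ^ nat \<bar>m\<bar>" using r0 by simp
    finally show ?thesis by simp
  qed
  show ?thesis
  proof (intro exI conjI allI)
    show "K + 1 > 0" using K0 by simp
    show "c > 0" by (rule c0)
    fix m :: int
    have "\<bar>ptilde q m\<bar> \<le> K * exp (- c * \<bar>real_of_int m\<bar>)" using main[of m] ex[of m] by simp
    also have "\<dots> < (K + 1) * exp (- c * \<bar>real_of_int m\<bar>)" by (simp add: algebra_simps)
    finally show "\<bar>ptilde q m\<bar> < (K + 1) * exp (- c * \<bar>real_of_int m\<bar>)" .
  qed
qed


theorem lemmaA:
  fixes q :: real
  assumes "0 < q" and "q < 1"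
  shows "(\<forall>n::int.
            inner_vec (ket q n) (Splus 0 (ket q (n - 1))) = q ^ nat \<bar>n\<bar> * fq q (q ^ (2 * nat \<bar>n\<bar> + 2))
          \<and> inner_vec (ket q (n - 1)) (Sminus 0 (ket q n)) = q ^ nat \<bar>n\<bar> * fq q (q ^ (2 * nat \<bar>n\<bar> + 2)))
       \<and> (\<exists>C1 c. C1 > 0 \<and> c > 0 \<and> (\<forall>m::int. \<bar>ptilde q m\<bar> < C1 * exp (- c * \<bar>real_of_int m\<bar>)))"
  using part1[OF assms] ptilde_bound[OF assms] by blast

end
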